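(* Consider a cryptomining facility with two machine types of capacities $c_1^M,c_2^M>0$ and per-unit mining rewards $r_1<r_2$, participating in a reg-up program with committed capacity $c_1\ge0$ and price $p_1$ and a reg-down program with committed capacity $c_2\ge 0$ and price $p_2$, with $c_1+c_2\le c_1^M+c_2^M$. For deployment ratios $(\epsilon_1,\epsilon_2)\in[0,1]^2$ let $L=\epsilon_1c_1+(1-\epsilon_2)c_2$ and $$\mathrm{cost}_{reg}(\epsilon,c)=\begin{cases} r_1L-p_1c_1-p_2c_2 & \text{if } L\le c_1^M,\\ r_2L+(r_1-r_2)c_1^M-p_1c_1-p_2c_2 & \text{otherwise.}\end{cases}$$ Let $\theta\in[0,1]$, $\lambda_1,\lambda_2>0$, and suppose $(\epsilon_1,\epsilon_2)$ has joint density $$\theta\,\delta(\epsilon_1)\frac{\lambda_2e^{-\lambda_2\epsilon_2}}{1-e^{-\lambda_2}}+(1-\theta)\,\delta(\epsilon_2)\frac{\lambda_1e^{-\lambda_1\epsilon_1}}{1-e^{-\lambda_1}}\qquad\text{on }[0,1]^2.$$ For $j=1,2$ write $\bar\epsilon_j=\frac{1-(\lambda_j+1)e^{-\lambda_j}}{\lambda_j(1-e^{-\lambda_j})}$. Then $$\mathbb{E}_\epsilon[\mathrm{cost}_{reg}(\epsilon,c)]=\begin{cases}Q_1 & \text{if } c_1+c_2<c_1^M,\\ Q_2 & \text{if } c_2\ge c_1^M,\\ Q_3 & \text{otherwise,}\end{cases}$$ where $$Q_1=c_1\big[(1-\theta)r_1\bar\epsilon_1-p_1\big]+c_2\big[r_1(1-\theta\bar\epsilon_2)-p_2\big],$$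 $$Q_2=Q_1+(r_1-r_2)\Big(\theta\,\frac{\lambda_2c_1^M+c_2\big(1-\lambda_2-e^{-\lambda_2(1-c_1^M/c_2)}\big)}{\lambda_2(1-e^{-\lambda_2})}+(1-\theta)\big[c_1^M-c_2-c_1\bar\epsilon_1\big]\Big),$$ $$Q_3=Q_1+(r_1-r_2)(1-\theta)\,\frac{\lambda_1(c_2-c_1^M)+c_1\big(1+\lambda_1-e^{-\lambda_1(c_1^M-c_1-c_2)/c_1}\big)}{\lambda_1(e^{\lambda_1}-1)}.$$
   Context: $\epsilon_1$ is the deployment ratio of reg-up (load reduction $\epsilon_1c_1$) and $\epsilon_2$ that of reg-down; a facility committing $c_2$ to reg-down lowers its operating point by $c_2$ and, when deployed with ratio $\epsilon_2$, its load reduction is $(1-\epsilon_2)c_2$. The quantities $\bar\epsilon_j$ are the means of the truncated exponential distributions with parameters $\lambda_j$ on $[0,1]$ (written $\mathbb{E}[\epsilon_j]$ in the paper). $\delta$ is the Dirac delta: with probability $\theta$ only reg-down is deployed ($\epsilon_1=0$), otherwise only reg-up ($\epsilon_2=0$). *)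

theory Defs
  imports "HOL-Analysis.Analysis"
begin

definition cost_reg ::
  "real \<Rightarrow> real \<Rightarrow> real \<Rightarrow> real \<Rightarrow> real \<Rightarrow> real \<Rightarrow> real \<Rightarrow> real \<Rightarrow> real \<Rightarrow> real" where
  "cost_reg r1 r2 p1 p2 cM1 c1 c2 e1 e2 =
     (let L = e1 * c1 + (1 - e2) * c2 in
      if L \<le> cM1 then r1 * L - p1 * c1 - p2 * c2
      else r2 * L + (r1 - r2) * cM1 - p1 * c1 - p2 * c2)"

definition trunc_exp_dens :: "real \<Rightarrow> real \<Rightarrow> real" where
  "trunc_exp_dens lam x = lam * exp (- lam * x) / (1 - exp (- lam))"

text \<open>Mean of the truncated exponential distribution (closed form given in the paper).\<close>
definition eps_bar :: "real \<Rightarrow> real" where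
  "eps_bar lam = (1 - (lam + 1) * exp (- lam)) / (lam * (1 - exp (- lam)))"

text \<open>Expectation of a function g(e1,e2) under the joint density
  theta * delta(e1) * f_{lam2}(e2) + (1 - theta) * delta(e2) * f_{lam1}(e1) on [0,1]^2:
  integrating out the Dirac deltas.\<close>
definition mix_expect ::
  "real \<Rightarrow> real \<Rightarrow> real \<Rightarrow> (real \<Rightarrow> real \<Rightarrow> real) \<Rightarrow> real" where
  "mix_expect theta lam1 lam2 g =
     theta * (LINT e2:{0..1}|lborel. g 0 e2 * trunc_exp_dens lam2 e2)
     + (1 - theta) * (LINT e1:{0..1}|lborel. g e1 0 * trunc_exp_dens lam1 e1)"

end

theory Submission
  imports Defs
begin

definition GG :: "real \<Rightarrow> real \<Rightarrow> real \<Rightarrow> real \<Rightarrow> real" where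
  "GG lam A B x = - (A + B*x + B/lam) * exp (-lam*x)"

lemma aux: "(lam::real) \<noteq> 0 \<Longrightarrow> D \<noteq> 0 \<Longrightarrow> ((-(0 + (0*x + 1*B) + 0)*e + e*(0*x+1*-lam)*-(A+B*x+B/lam))*D - -(A+B*x+B/lam)*e*0)/(D*D) = (A+B*x)*(lam*e/D)"
  by (simp add: field_simps)

lemma lin_exp_int:
  assumes "lam \<noteq> 0" "a \<le> b"
  shows "((\<lambda>x. (A + B*x) * trunc_exp_dens lam x) has_integral
          (GG lam A B b - GG lam A B a) / (1 - exp (-lam))) {a..b}"
proof -
  have "((\<lambda>x. (A + B*x) * trunc_exp_dens lam x) has_integral
          (GG lam A B b / (1 - exp (-lam)) - GG lam A B a / (1 - exp (-lam)))) {a..b}"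
  proof (rule fundamental_theorem_of_calculus[where f="\<lambda>x. GG lam A B x / (1 - exp (-lam))", OF assms(2)])
    fix x assume "x \<in> {a..b}"
    have "((\<lambda>x. GG lam A B x / (1 - exp (-lam))) has_real_derivative (A + B*x) * trunc_exp_dens lam x) (at x)"
      unfolding GG_def trunc_exp_dens_def
      apply (rule derivative_eq_intros refl)+
      using assms(1) apply simp
      apply (rule aux[OF assms(1)])
      using assms(1) apply simp
      done
    then show "((\<lambda>x. GG lam A B x / (1 - exp (-lam))) has_vector_derivative (A + B*x) * trunc_exp_dens lam x) (at x within {a..b})"
      using has_real_derivative_iff_has_vector_derivative has_vector_derivative_at_within by blast
  qed
  then show ?thesis by (simp add: diff_divide_distrib)
qed

lemma GG01: assumes "lam \<noteq> 0"
  shows "(GG lam A B 1 - GG lam A B 0) / (1 - exp (-lam)) = A + B * eps_bar lam"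
proof -
  have "1 - exp (-lam) \<noteq> 0" using assms by simp
  then have "exp (-lam) \<noteq> 1" by simp
  then show ?thesis unfolding GG_def eps_bar_def using assms
    by (simp add: field_simps)
qed

lemma GGlin: "GG lam A B x - GG lam A' B' x = GG lam (A - A') (B - B') x"
  unfolding GG_def by (simp add: algebra_simps diff_divide_distrib)

lemma split_int: assumes "lam \<noteq> 0"
  shows "(GG lam Ah Bh a - GG lam Ah Bh 0) / (1 - exp (-lam)) + (GG lam Al Bl 1 - GG lam Al Bl a) / (1 - exp (-lam))
   = Al + Bl * eps_bar lam + (GG lam (Ah - Al) (Bh - Bl) a - GG lam (Ah - Al) (Bh - Bl) 0) / (1 - exp (-lam))"
proof -
  have "(GG lam Ah Bh a - GG lam Ah Bh 0) / (1 - exp (-lam)) + (GG lam Al Bl 1 - GG lam Al Bl a) / (1 - exp (-lam))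
   = (GG lam Al Bl 1 - GG lam Al Bl 0) / (1 - exp (-lam)) + ((GG lam Ah Bh a - GG lam Al Bl a) - (GG lam Ah Bh 0 - GG lam Al Bl 0)) / (1 - exp (-lam))"
    by (simp add: diff_divide_distrib add_divide_distrib)
  then show ?thesis by (simp only: GG01[OF assms] GGlin)
qed

lemma caseB: assumes "lam1 \<noteq> 0" "lam2 \<noteq> 0" "c2 > 0" "cM1 = c2 * (1 - a)"
  "Ah = r2*c2 + (r1-r2)*cM1 - K" "Al = r1*c2 - K" "K = p1*c1+p2*c2"
 shows "theta * (Al + (-r1*c2) * eps_bar lam2 + (GG lam2 (Ah - Al) (-r2*c2 - -r1*c2) a - GG lam2 (Ah - Al) (-r2*c2 - -r1*c2) 0) / (1 - exp (-lam2)))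
    + (1 - theta) * (Ah + r2*c1 * eps_bar lam1) = c1 * ((1 - theta) * r1 * eps_bar lam1 - p1)
              + c2 * (r1 * (1 - theta * eps_bar lam2) - p2) + (r1 - r2) *
              (theta * (lam2 * cM1 + c2 * (1 - lam2 - exp (- lam2 * a)))
                 / (lam2 * (1 - exp (- lam2)))
               + (1 - theta) * (cM1 - c2 - c1 * eps_bar lam1))"
proof -
  have D: "1 - exp (-lam2) \<noteq> 0" using assms by simp
  have Z: "(GG lam2 (Ah - Al) (-r2*c2 - -r1*c2) a - GG lam2 (Ah - Al) (-r2*c2 - -r1*c2) 0) / (1 - exp (-lam2))
     = (r1 - r2) * ((lam2 * cM1 + c2 * (1 - lam2 - exp (- lam2 * a)))
                 / (lam2 * (1 - exp (- lam2))))"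
    unfolding GG_def assms(4-7) using assms(1-3) D by (simp add: field_simps)
  show ?thesis unfolding Z unfolding assms(5-7) by (simp add: algebra_simps)
qed

lemma fracC: fixes Y lam u :: real assumes "u > 0" "u \<noteq> 1" "lam \<noteq> 0"
  shows "Y / (lam * ((1 / u) - 1)) = (u * Y) / (lam * (1 - u))"
proof -
  have "lam * ((1 / u) - 1) = lam * (1 - u) / u" using assms(1) by (simp add: field_simps)
  then have "Y / (lam * ((1 / u) - 1)) = Y * u / (lam * (1 - u))"
    by (simp only: divide_divide_eq_right)
  then show ?thesis by (simp only: mult.commute)
qed

lemma G_lemma: fixes lam d b c1 :: real assumes "lam \<noteq> 0"
  shows "GG lam (-(d*b*c1)) (d*c1) b - GG lam (-(d*b*c1)) (d*c1) 0 = d*c1/lam*(1 - exp (-lam*b)) - d*b*c1"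
  unfolding GG_def by (simp add: algebra_simps)

lemma caseC_core2: fixes lam u w d b c1 Ah Al r1 r2 :: real
  assumes "lam \<noteq> 0" "1 - u \<noteq> 0" "Ah = Al + d*b*c1" "r2 = r1 - d"
  shows "Ah + r2*c1*((1 - (lam + 1) * u) / (lam * (1 - u))) + (d*c1/lam * (1 - w) - d*b*c1) / (1 - u)
    = Al + r1*c1*((1 - (lam + 1) * u) / (lam * (1 - u))) + d * (u * (c1*(1+lam) - lam*b*c1) - c1 * w) / (lam * (1 - u))"
proof -
  define P where "P = (1 - (lam + 1) * u) / (lam * (1 - u))"
  define Q where "Q = (d*c1/lam * (1 - w) - d*b*c1) / (1 - u)"
  define R where "R = d * (u * (c1*(1+lam) - lam*b*c1) - c1 * w) / (lam * (1 - u))"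
  have LD: "lam * (1 - u) \<noteq> 0" using assms by (metis mult_eq_0_iff)
  have hP: "P * (lam * (1 - u)) = 1 - (lam + 1) * u" unfolding P_def using LD by simp
  have hR: "R * (lam * (1 - u)) = d * (u * (c1*(1+lam) - lam*b*c1) - c1 * w)" unfolding R_def using LD by simp
  have hQ: "Q * (lam * (1 - u)) = d*c1*(1 - w) - lam*d*b*c1" unfolding Q_def using assms
    by (simp add: field_simps)
  have "(d*b*c1 - d*c1*P + Q - R) * (lam * (1 - u))
     = d*b*c1*(lam * (1 - u)) - d*c1*(P * (lam * (1 - u))) + Q * (lam * (1 - u)) - R * (lam * (1 - u))"
    by (simp add: algebra_simps)
  also have "\<dots> = d*b*c1*(lam * (1 - u)) - d*c1*(1 - (lam + 1) * u) + (d*c1*(1 - w) - lam*d*b*c1)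
      - d * (u * (c1*(1+lam) - lam*b*c1) - c1 * w)"
    by (simp only: hP hQ hR)
  also have "\<dots> = 0" by (simp add: algebra_simps)
  finally have "d*b*c1 - d*c1*P + Q - R = 0" using LD by simp
  then have "Ah + r2*c1 * P + Q = Al + r1*c1*P + R"
    unfolding assms(3,4) by (simp add: algebra_simps)
  then show ?thesis unfolding P_def Q_def R_def .
qed

lemma finalC: fixes theta Al r1 c1 c2 e1 e2 R p1 p2 :: real
  assumes "Al = r1*c2 - (p1*c1 + p2*c2)"
  shows "theta * (Al + -r1*c2*e2) + (1 - theta) * (Al + r1*c1*e1 + R)
   = c1 * ((1 - theta) * r1 * e1 - p1) + c2 * (r1 * (1 - theta * e2) - p2) + (1 - theta) * R"
  unfolding assms by (simp add: algebra_simps)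

lemma cost_max: "cost_reg r1 r2 p1 p2 cM1 c1 c2 e1 e2 =
   r1*(e1*c1+(1-e2)*c2) - p1*c1 - p2*c2 + (r2-r1)*max (e1*c1+(1-e2)*c2 - cM1) 0"
  unfolding cost_reg_def Let_def by (simp add: max_def algebra_simps)

lemma cost_lo: "e1*c1+(1-e2)*c2 \<le> cM1 \<Longrightarrow> cost_reg r1 r2 p1 p2 cM1 c1 c2 e1 e2 =
   r1*(e1*c1+(1-e2)*c2) - p1*c1 - p2*c2"
  unfolding cost_max by simp

lemma cost_hi: "e1*c1+(1-e2)*c2 \<ge> cM1 \<Longrightarrow> cost_reg r1 r2 p1 p2 cM1 c1 c2 e1 e2 =
   r2*(e1*c1+(1-e2)*c2) + (r1-r2)*cM1 - p1*c1 - p2*c2"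
  unfolding cost_max by (simp add: algebra_simps)

lemma LINT_eq:
  fixes f :: "real \<Rightarrow> real"
  assumes "continuous_on {0..1} f" "(f has_integral I) {0..1}"
  shows "(LINT x:{0..1}|lborel. f x) = I"
  using set_borel_integral_eq_integral(2)[OF borel_integrable_atLeastAtMost'[OF assms(1)]]
    assms(2) integral_unique by simp

lemma cont_int: "continuous_on {0..1} (\<lambda>x. cost_reg r1 r2 p1 p2 cM1 c1 c2 (f x) (g x) * trunc_exp_dens lam x)"
  if "continuous_on {0..1} f" "continuous_on {0..1} g" "lam > 0"
proof -
  have "1 - exp (-lam) \<noteq> 0" using that(3) by simp
  then show ?thesis unfolding cost_max trunc_exp_dens_def using that
    by (intro continuous_intros) auto
qed

theorem theorem3:
  fixes cM1 cM2 r1 r2 p1 p2 c1 c2 theta lam1 lam2 :: real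
  assumes "cM1 > 0" and "cM2 > 0" and "r1 < r2"
    and "c1 \<ge> 0" and "c2 \<ge> 0" and "c1 + c2 \<le> cM1 + cM2"
    and "0 \<le> theta" and "theta \<le> 1" and "lam1 > 0" and "lam2 > 0"
  shows "mix_expect theta lam1 lam2 (cost_reg r1 r2 p1 p2 cM1 c1 c2) =
    (let Q1 = c1 * ((1 - theta) * r1 * eps_bar lam1 - p1)
              + c2 * (r1 * (1 - theta * eps_bar lam2) - p2);
         Q2 = Q1 + (r1 - r2) *
              (theta * (lam2 * cM1 + c2 * (1 - lam2 - exp (- lam2 * (1 - cM1 / c2))))
                 / (lam2 * (1 - exp (- lam2)))
               + (1 - theta) * (cM1 - c2 - c1 * eps_bar lam1));
         Q3 = Q1 + (r1 - r2) * (1 - theta) *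
              (lam1 * (c2 - cM1) + c1 * (1 + lam1 - exp (- lam1 * (cM1 - c1 - c2) / c1)))
                 / (lam1 * (exp lam1 - 1))
     in if c1 + c2 < cM1 then Q1 else if c2 \<ge> cM1 then Q2 else Q3)"
proof -
  let ?g = "cost_reg r1 r2 p1 p2 cM1 c1 c2"
  define K where "K = p1*c1 + p2*c2"
  have l1: "lam1 \<noteq> 0" and l2: "lam2 \<noteq> 0" using assms by auto
  have D1: "1 - exp (-lam1) \<noteq> 0" and D2: "1 - exp (-lam2) \<noteq> 0" using assms by auto
  have ct1: "continuous_on {0..1} (\<lambda>e2. ?g 0 e2 * trunc_exp_dens lam2 e2)"
    by (rule cont_int) (use assms in \<open>auto intro: continuous_intros\<close>)
  have ct2: "continuous_on {0..1} (\<lambda>e1. ?g e1 0 * trunc_exp_dens lam1 e1)"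
    by (rule cont_int) (use assms in \<open>auto intro: continuous_intros\<close>)
  have M: "mix_expect theta lam1 lam2 ?g = theta * (LINT e2:{0..1}|lborel. ?g 0 e2 * trunc_exp_dens lam2 e2)
     + (1 - theta) * (LINT e1:{0..1}|lborel. ?g e1 0 * trunc_exp_dens lam1 e1)"
    unfolding mix_expect_def ..
  consider (A) "c1 + c2 < cM1" | (B) "\<not> c1 + c2 < cM1" "c2 \<ge> cM1" | (C) "\<not> c1 + c2 < cM1" "\<not> c2 \<ge> cM1"
    by blast
  then show ?thesis
  proof cases
    case A
    have h1: "((\<lambda>e2. ?g 0 e2 * trunc_exp_dens lam2 e2) has_integral
       (GG lam2 (r1*c2 - K) (-r1*c2) 1 - GG lam2 (r1*c2 - K) (-r1*c2) 0) / (1 - exp (-lam2))) {0..1}"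
    proof (rule has_integral_eq[OF _ lin_exp_int[OF l2, of 0 1]])
      fix x :: real assume x: "x \<in> {0..1}"
      have "0 \<le> x * c2" using x assms by auto
      then have "0 * c1 + (1 - x) * c2 \<le> cM1" using A assms by (simp add: algebra_simps)
      then show "(r1*c2 - K + - r1 * c2 * x) * trunc_exp_dens lam2 x = ?g 0 x * trunc_exp_dens lam2 x"
        by (subst cost_lo) (auto simp: K_def algebra_simps)
    qed simp
    have h2: "((\<lambda>e1. ?g e1 0 * trunc_exp_dens lam1 e1) has_integral
       (GG lam1 (r1*c2 - K) (r1*c1) 1 - GG lam1 (r1*c2 - K) (r1*c1) 0) / (1 - exp (-lam1))) {0..1}"
    proof (rule has_integral_eq[OF _ lin_exp_int[OF l1, of 0 1]])
      fix x :: real assume x: "x \<in> {0..1}"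
      have "x * c1 \<le> c1" using x assms by (simp add: mult_left_le_one_le)
      then have "x * c1 + (1 - 0) * c2 \<le> cM1" using A assms by (simp add: algebra_simps)
      then show "(r1*c2 - K + r1 * c1 * x) * trunc_exp_dens lam1 x = ?g x 0 * trunc_exp_dens lam1 x"
        by (subst cost_lo) (auto simp: K_def algebra_simps)
    qed simp
    have XA: "theta * (r1*c2 - K + -r1*c2*eps_bar lam2) + (1-theta)*(r1*c2 - K + r1*c1*eps_bar lam1)
      = c1 * ((1 - theta) * r1 * eps_bar lam1 - p1) + c2 * (r1 * (1 - theta * eps_bar lam2) - p2)"
      unfolding K_def by (simp add: algebra_simps)
    show ?thesis
      unfolding M LINT_eq[OF ct1 h1] LINT_eq[OF ct2 h2] GG01[OF l1] GG01[OF l2] XA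
      using A by (simp add: Let_def)
  next
    case B
    have c2p: "c2 > 0" using B assms by linarith
    define a where "a = 1 - cM1 / c2"
    have cM: "cM1 = c2 * (1 - a)" using c2p by (simp add: a_def field_simps)
    have a0: "0 \<le> a" using B c2p by (simp add: a_def field_simps)
    have a1: "a \<le> 1" using assms c2p by (simp add: a_def field_simps)
    define Ah where "Ah = r2*c2 + (r1-r2)*cM1 - K"
    define Al where "Al = r1*c2 - K"
    define V1 where "V1 = (GG lam2 Ah (-r2*c2) a - GG lam2 Ah (-r2*c2) 0) / (1 - exp (-lam2))
       + (GG lam2 Al (-r1*c2) 1 - GG lam2 Al (-r1*c2) a) / (1 - exp (-lam2))"
    define V2 where "V2 = (GG lam1 Ah (r2*c1) 1 - GG lam1 Ah (r2*c1) 0) / (1 - exp (-lam1))"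
    have h1a: "((\<lambda>e2. ?g 0 e2 * trunc_exp_dens lam2 e2) has_integral
       (GG lam2 Ah (-r2*c2) a - GG lam2 Ah (-r2*c2) 0) / (1 - exp (-lam2))) {0..a}"
    proof (rule has_integral_eq[OF _ lin_exp_int[OF l2 a0]])
      fix x assume x: "x \<in> {0..a}"
      have "x * c2 \<le> a * c2" using x c2p by (intro mult_right_mono) auto
      then have "cM1 \<le> 0 * c1 + (1 - x) * c2" using cM by (simp add: algebra_simps)
      then show "(Ah + - r2 * c2 * x) * trunc_exp_dens lam2 x = ?g 0 x * trunc_exp_dens lam2 x"
        by (subst cost_hi) (auto simp: Ah_def K_def algebra_simps)
    qed
    have h1b: "((\<lambda>e2. ?g 0 e2 * trunc_exp_dens lam2 e2) has_integral
       (GG lam2 Al (-r1*c2) 1 - GG lam2 Al (-r1*c2) a) / (1 - exp (-lam2))) {a..1}"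
    proof (rule has_integral_eq[OF _ lin_exp_int[OF l2 a1]])
      fix x assume x: "x \<in> {a..1}"
      have "a * c2 \<le> x * c2" using x c2p by (intro mult_right_mono) auto
      then have "0 * c1 + (1 - x) * c2 \<le> cM1" using cM by (simp add: algebra_simps)
      then show "(Al + - r1 * c2 * x) * trunc_exp_dens lam2 x = ?g 0 x * trunc_exp_dens lam2 x"
        by (subst cost_lo) (auto simp: Al_def K_def algebra_simps)
    qed
    have h1: "((\<lambda>e2. ?g 0 e2 * trunc_exp_dens lam2 e2) has_integral V1) {0..1}"
      unfolding V1_def by (rule has_integral_combine[OF a0 a1 h1a h1b])
    have h2: "((\<lambda>e1. ?g e1 0 * trunc_exp_dens lam1 e1) has_integral V2) {0..1}"
      unfolding V2_def
    proof (rule has_integral_eq[OF _ lin_exp_int[OF l1, of 0 1]])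
      fix x :: real assume x: "x \<in> {0..1}"
      have "0 \<le> x * c1" using x assms by auto
      then have "cM1 \<le> x * c1 + (1 - 0) * c2" using B by simp
      then show "(Ah + r2 * c1 * x) * trunc_exp_dens lam1 x = ?g x 0 * trunc_exp_dens lam1 x"
        by (subst cost_hi) (auto simp: Ah_def K_def algebra_simps)
    qed simp
    have E: "exp (- lam2 * (1 - cM1 / c2)) = exp (- lam2 * a)" by (simp add: a_def)
    have X: "theta * V1 + (1 - theta) * V2 = c1 * ((1 - theta) * r1 * eps_bar lam1 - p1)
              + c2 * (r1 * (1 - theta * eps_bar lam2) - p2) + (r1 - r2) *
              (theta * (lam2 * cM1 + c2 * (1 - lam2 - exp (- lam2 * a)))
                 / (lam2 * (1 - exp (- lam2)))
               + (1 - theta) * (cM1 - c2 - c1 * eps_bar lam1))"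
      unfolding V1_def V2_def split_int[OF l2] GG01[OF l1]
      by (rule caseB[OF l1 l2 c2p cM Ah_def Al_def K_def])
    show ?thesis
      unfolding M LINT_eq[OF ct1 h1] LINT_eq[OF ct2 h2] E X
      using B by (simp add: Let_def)
  next
    case C
    have c1p: "c1 > 0" using C assms by linarith
    define b where "b = (cM1 - c2) / c1"
    have cM: "cM1 = c2 + b * c1" using c1p by (simp add: b_def field_simps)
    have b0: "0 \<le> b" using C c1p by (simp add: b_def field_simps)
    have b1: "b \<le> 1" using C c1p by (simp add: b_def field_simps)
    define Ah where "Ah = r2*c2 + (r1-r2)*cM1 - K"
    define Al where "Al = r1*c2 - K"
    define V1 where "V1 = (GG lam2 Al (-r1*c2) 1 - GG lam2 Al (-r1*c2) 0) / (1 - exp (-lam2))"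
    define V2 where "V2 = (GG lam1 Al (r1*c1) b - GG lam1 Al (r1*c1) 0) / (1 - exp (-lam1))
       + (GG lam1 Ah (r2*c1) 1 - GG lam1 Ah (r2*c1) b) / (1 - exp (-lam1))"
    have h1: "((\<lambda>e2. ?g 0 e2 * trunc_exp_dens lam2 e2) has_integral V1) {0..1}"
      unfolding V1_def
    proof (rule has_integral_eq[OF _ lin_exp_int[OF l2, of 0 1]])
      fix x :: real assume x: "x \<in> {0..1}"
      have "0 \<le> x * c2" using x assms by auto
      then have "0 * c1 + (1 - x) * c2 \<le> cM1" using C by (simp add: algebra_simps)
      then show "(Al + - r1 * c2 * x) * trunc_exp_dens lam2 x = ?g 0 x * trunc_exp_dens lam2 x"
        by (subst cost_lo) (auto simp: Al_def K_def algebra_simps)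
    qed simp
    have h2a: "((\<lambda>e1. ?g e1 0 * trunc_exp_dens lam1 e1) has_integral
       (GG lam1 Al (r1*c1) b - GG lam1 Al (r1*c1) 0) / (1 - exp (-lam1))) {0..b}"
    proof (rule has_integral_eq[OF _ lin_exp_int[OF l1 b0]])
      fix x assume x: "x \<in> {0..b}"
      have "x * c1 \<le> b * c1" using x c1p by (intro mult_right_mono) auto
      then have "x * c1 + (1 - 0) * c2 \<le> cM1" using cM by (simp add: algebra_simps)
      then show "(Al + r1 * c1 * x) * trunc_exp_dens lam1 x = ?g x 0 * trunc_exp_dens lam1 x"
        by (subst cost_lo) (auto simp: Al_def K_def algebra_simps)
    qed
    have h2b: "((\<lambda>e1. ?g e1 0 * trunc_exp_dens lam1 e1) has_integral
       (GG lam1 Ah (r2*c1) 1 - GG lam1 Ah (r2*c1) b) / (1 - exp (-lam1))) {b..1}"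
    proof (rule has_integral_eq[OF _ lin_exp_int[OF l1 b1]])
      fix x assume x: "x \<in> {b..1}"
      have "b * c1 \<le> x * c1" using x c1p by (intro mult_right_mono) auto
      then have "cM1 \<le> x * c1 + (1 - 0) * c2" using cM by (simp add: algebra_simps)
      then show "(Ah + r2 * c1 * x) * trunc_exp_dens lam1 x = ?g x 0 * trunc_exp_dens lam1 x"
        by (subst cost_hi) (auto simp: Ah_def K_def algebra_simps)
    qed
    have h2: "((\<lambda>e1. ?g e1 0 * trunc_exp_dens lam1 e1) has_integral V2) {0..1}"
      unfolding V2_def by (rule has_integral_combine[OF b0 b1 h2a h2b])
    have "- lam1 * (cM1 - c1 - c2) / c1 = lam1 + - lam1 * b"
      using c1p by (simp add: b_def field_simps)
    then have E: "exp (- lam1 * (cM1 - c1 - c2) / c1) = exp lam1 * exp (- lam1 * b)"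
      by (simp add: exp_add[symmetric])
    have E2: "exp lam1 = 1 / exp (- lam1)" by (simp add: exp_minus divide_inverse)
    define u where "u = exp (- lam1)"
    define w where "w = exp (- lam1 * b)"
    have u0: "u > 0" unfolding u_def by simp
    have u1: "u \<noteq> 1" unfolding u_def using l1 by simp
    have n1: "1 - u \<noteq> 0" using u1 by (metis right_minus_eq)
    have dA: "Al - Ah = -((r1-r2)*b*c1)" unfolding Ah_def Al_def cM by (simp add: algebra_simps)
    have dB: "r1*c1 - r2*c1 = (r1-r2)*c1" by (simp add: algebra_simps)
    have G: "(GG lam1 (Al - Ah) (r1*c1 - r2*c1) b - GG lam1 (Al - Ah) (r1*c1 - r2*c1) 0) / (1 - exp (-lam1))
        = ((r1-r2)*c1/lam1 * (1 - w) - (r1-r2)*b*c1) / (1 - u)"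
      by (simp only: dA dB G_lemma[OF l1] u_def w_def)
    have eb: "eps_bar lam1 = (1 - (lam1+1)*u)/(lam1*(1-u))" unfolding eps_bar_def u_def ..
    have core: "Ah + r2*c1*eps_bar lam1 + ((r1-r2)*c1/lam1 * (1 - w) - (r1-r2)*b*c1) / (1 - u)
       = Al + r1*c1*eps_bar lam1 + (r1-r2) * (u * (c1*(1+lam1) - lam1*b*c1) - c1 * w) / (lam1 * (1 - u))"
      unfolding eb by (rule caseC_core2[OF l1 n1]) (simp_all add: Ah_def Al_def cM algebra_simps)
    have uY: "u * ((r1 - r2) * (1 - theta) * (lam1 * (c2 - cM1) + c1 * (1 + lam1 - 1 / u * w)))
       = (1 - theta) * ((r1-r2) * (u * (c1*(1+lam1) - lam1*b*c1) - c1 * w))"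
      unfolding cM using u0 by (simp add: field_simps)
    have F: "(r1 - r2) * (1 - theta) * (lam1 * (c2 - cM1) + c1 * (1 + lam1 - 1 / u * w)) / (lam1 * (1 / u - 1))
        = (1 - theta) * ((r1-r2) * (u * (c1*(1+lam1) - lam1*b*c1) - c1 * w) / (lam1 * (1 - u)))"
      unfolding fracC[OF u0 u1 l1] uY by simp
    have X: "theta * V1 + (1 - theta) * V2 = c1 * ((1 - theta) * r1 * eps_bar lam1 - p1)
              + c2 * (r1 * (1 - theta * eps_bar lam2) - p2) + (r1 - r2) * (1 - theta) *
              (lam1 * (c2 - cM1) + c1 * (1 + lam1 - (1 / exp (- lam1)) * exp (- lam1 * b)))
                 / (lam1 * ((1 / exp (- lam1)) - 1))"
      unfolding u_def[symmetric] w_def[symmetric] F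
      unfolding V1_def V2_def split_int[OF l1] GG01[OF l2] G core
      by (rule finalC) (simp add: Al_def K_def)
    show ?thesis
      unfolding M LINT_eq[OF ct1 h1] LINT_eq[OF ct2 h2] E E2 X
      using C by (simp add: Let_def)
  qed
qed

end
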